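(* Let $n\ge4$ be even, $p\ge n+1$ an integer, $c_1$ a positive integer, $a_k=pc_k$, $c_{k+1}=p^2c_k$, and let $T$, $I^{(k)}_i$ and $\lambda_i$ be as in the context. Then for every odd $i$ with $3\le i\le n-1$, every $k\ge1$ and every integer $j$ with $1\le j\le n/2-1$ and $j\ne\frac{i-1}{2}$, $$\lambda_i(I^{(k)}_{2j})>\lambda_i(I^{(k)}_{2j+1}).$$
   Context: $\pi$ is the permutation of $\{1,\dots,n\}$ with top row $1,2,\dots,n$ and bottom row $n,3,2,5,4,\dots,n-1,n-2,1$. Right Rauzy induction: step "0" when the rightmost domain (top) interval is longer, "1" when the rightmost image (bottom) interval is longer. For $a,c>0$, $\dot\gamma_{m,a}=1^{n-1-m}0^a10^2$, $\gamma_{a,c}=0\,\dot\gamma_{n-2,a}\cdots\dot\gamma_{2,a}\,1^{c(n-1)}$; its transition matrix $\Theta_{a,c}$ (old lengths $=\Theta_{a,c}\cdot$new lengths) has row $1=(1,c,\dots,c)$, row $n=(1,c+1,\dots,c+1)$, and for $1\le i\le(n-2)/2$: row $2i$ has $0$ in column 1, $2$ in columns $2i,2i+1$, $1$ in the other columns among $2,\dots,n$; row $2i+1$ has $a$ in column $2i$, $a+1$ in column $2i+1$, $0$ elsewhere. $\Theta_k=\Theta_{a_k,c_k}$. $T$ is an IET of $[0,1)$ with permutation $\pi$ whose right Rauzy induction path is $\gamma_{a_1,c_1}\gamma_{a_2,c_2}\cdots$; $I^{(k)}$ is the interval on which the induced map lives after the first $k$ blocks and $I^{(k)}_1,\dots,I^{(k)}_n$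 its exchanged subintervals; lengths satisfy $\ell^{(k-1)}=\Theta_k\ell^{(k)}$. For $v\ge0$, $|v|$ is the sum of entries and $\overline v=v/|v|$. $\lambda_i$ denotes the $T$-invariant Borel probability measure such that for every $k\ge0$, $(\lambda_i(I^{(k)}_t))_t$ is a positive multiple of $\lim_{m\to\infty}\overline{\Theta_{k+1}\cdots\Theta_me_i}$. *)

theory Defs
  imports Complex_Main
begin

text \<open>Vectors indexed by 1..n are functions nat => real; n x n matrices are
  functions nat => nat => real, with indices in 1..n.\<close>

definition Theta :: "nat \<Rightarrow> nat \<Rightarrow> nat \<Rightarrow> nat \<Rightarrow> nat \<Rightarrow> real" where
  "Theta n a c r s =
     (if r \<in> {1..n} \<and> s \<in> {1..n} then
        (if r = 1 then (if s = 1 then 1 else real c)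
         else if r = n then (if s = 1 then 1 else real c + 1)
         else if even r then (if s = 1 then 0 else if s = r \<or> s = r + 1 then 2 else 1)
         else (if s = r - 1 then real a else if s = r then real a + 1 else 0))
      else 0)"

definition matvec :: "nat \<Rightarrow> (nat \<Rightarrow> nat \<Rightarrow> real) \<Rightarrow> (nat \<Rightarrow> real) \<Rightarrow> nat \<Rightarrow> real" where
  "matvec n M v = (\<lambda>r. \<Sum>s=1..n. M r s * v s)"

text \<open>thetaprod n Th k d v = Th (k+1) * Th (k+2) * ... * Th (k+d) * v\<close>
fun thetaprod :: "nat \<Rightarrow> (nat \<Rightarrow> nat \<Rightarrow> nat \<Rightarrow> real) \<Rightarrow> nat \<Rightarrow> nat \<Rightarrow> (nat \<Rightarrow> real) \<Rightarrow> nat \<Rightarrow> real" where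
  "thetaprod n Th k 0 v = v"
| "thetaprod n Th k (Suc d) v = thetaprod n Th k d (matvec n (Th (k + d + 1)) v)"

definition unitvec :: "nat \<Rightarrow> nat \<Rightarrow> real" where
  "unitvec i = (\<lambda>t. if t = i then 1 else 0)"

definition vnorm1 :: "nat \<Rightarrow> (nat \<Rightarrow> real) \<Rightarrow> real" where
  "vnorm1 n v = (\<Sum>t=1..n. v t)"

definition normalized :: "nat \<Rightarrow> (nat \<Rightarrow> real) \<Rightarrow> nat \<Rightarrow> real" where
  "normalized n v = (\<lambda>t. v t / vnorm1 n v)"

end

theory Submission
  imports Defs
begin

definition Sv :: "nat \<Rightarrow> (nat \<Rightarrow> real) \<Rightarrow> real" where
  "Sv n v = (\<Sum>s=2..n. v s)"

lemma sum_split1: "(n::nat) \<ge> 1 \<Longrightarrow> (\<Sum>s=1..n. f s) = f 1 + (\<Sum>s=2..n. f s)"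
proof -
  assume "n \<ge> 1"
  then have "{1..n} = insert 1 {2..n}" by auto
  then show ?thesis by simp
qed

lemma sum_if1: "(n::nat) \<ge> 1 \<Longrightarrow> (\<Sum>s=1..n. (if s = 1 then 0 else v s)) = Sv n v"
  unfolding Sv_def by (subst sum_split1) (auto intro!: sum.cong)

lemma sum_split1': "(n::nat) \<ge> 1 \<Longrightarrow> sum f {Suc 0..n} = f (Suc 0) + sum f {2..n}"
  using sum_split1[of n f] by simp

lemma sum_if1': "(n::nat) \<ge> 1 \<Longrightarrow> (\<Sum>s=Suc 0..n. (if s = Suc 0 then 0 else v s)) = Sv n v"
  using sum_if1[of n v] by simp

lemma row_even:
  assumes "even r" "2 \<le> r" "r < n"
  shows "matvec n (Theta n a c) v r = Sv n v + v r + v (r+1)"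
proof -
  have "matvec n (Theta n a c) v r = (\<Sum>s=1..n. (if s=1 then 0 else v s) + (if s = r then v s else 0) + (if s = r+1 then v s else 0))"
    unfolding matvec_def using assms by (intro sum.cong) (auto simp: Theta_def)
  also have "\<dots> = (\<Sum>s=1..n. (if s=1 then 0 else v s)) + v r + v (r+1)"
    using assms by (simp add: sum.distrib)
  finally show ?thesis using assms sum_if1[of n v] by simp
qed

lemma row_odd:
  assumes "odd r" "3 \<le> r" "r < n"
  shows "matvec n (Theta n a c) v r = real a * v (r-1) + (real a + 1) * v r"
proof -
  have r1: "r - 1 \<in> {1..n}" "r \<in> {1..n}" using assms by auto
  have "matvec n (Theta n a c) v r = (\<Sum>s=1..n. (if s = r - 1 then real a * v s else 0) + (if s = r then (real a + 1) * v s else 0))"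
    unfolding matvec_def using assms by (intro sum.cong) (auto simp: Theta_def)
  also have "\<dots> = real a * v (r-1) + (real a + 1) * v r"
    using assms r1 by (simp only: sum.distrib sum.delta) simp
  finally show ?thesis .
qed

lemma row_n:
  assumes "2 \<le> n"
  shows "matvec n (Theta n a c) v n = v 1 + (real c + 1) * Sv n v"
proof -
  have "matvec n (Theta n a c) v n = (\<Sum>s=1..n. (if s = 1 then v s else 0) + (real c + 1) * (if s=1 then 0 else v s))"
    unfolding matvec_def using assms by (intro sum.cong) (auto simp: Theta_def)
  also have "\<dots> = v 1 + (real c + 1) * Sv n v"
    using assms by (simp add: sum.distrib sum_distrib_left[symmetric] sum_if1')
  finally show ?thesis .
qed

lemma row_1:
  assumes "2 \<le> n"
  shows "matvec n (Theta n a c) v 1 = v 1 + real c * Sv n v"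
proof -
  have "matvec n (Theta n a c) v 1 = (\<Sum>s=1..n. (if s = 1 then v s else 0) + real c * (if s=1 then 0 else v s))"
    unfolding matvec_def using assms by (intro sum.cong) (auto simp: Theta_def)
  also have "\<dots> = v 1 + real c * Sv n v"
    using assms by (simp add: sum.distrib sum_distrib_left[symmetric] sum_if1')
  finally show ?thesis .
qed

lemma Theta_nonneg: "Theta n a c r s \<ge> 0"
  by (auto simp: Theta_def)

lemma Theta_le: "Theta n a c r s \<le> real a + real c + 2"
  by (auto simp: Theta_def)

lemma matvec_nonneg:
  assumes "\<forall>t\<in>{1..n}. v t \<ge> 0"
  shows "matvec n (Theta n a c) v r \<ge> 0"
  unfolding matvec_def using assms by (intro sum_nonneg) (auto intro: mult_nonneg_nonneg Theta_nonneg)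

lemma matvec_le:
  assumes "\<forall>t\<in>{1..n}. v t \<ge> 0" "n \<ge> 1"
  shows "matvec n (Theta n a c) v r \<le> (real a + real c + 2) * (v 1 + Sv n v)"
proof -
  have "matvec n (Theta n a c) v r \<le> (\<Sum>s=1..n. (real a + real c + 2) * v s)"
    unfolding matvec_def using assms by (intro sum_mono mult_right_mono Theta_le) auto
  also have "\<dots> = (real a + real c + 2) * (v 1 + Sv n v)"
    using assms by (simp add: sum_distrib_left[symmetric] sum_split1' Sv_def)
  finally show ?thesis .
qed

lemma Sv_ge_n:
  assumes "\<forall>t\<in>{1..n}. v t \<ge> 0" "n \<ge> 2"
  shows "Sv n v \<ge> v n"
  unfolding Sv_def using assms by (intro member_le_sum) auto

lemma vnorm1_eq: "n \<ge> 1 \<Longrightarrow> vnorm1 n v = v 1 + Sv n v"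
  by (simp add: vnorm1_def Sv_def sum_split1')

lemma thetaprod_Suc:
  "thetaprod n Th k (Suc d) v = matvec n (Th (k+1)) (thetaprod n Th (k+1) d v)"
  by (induction d arbitrary: v) (simp_all add: add_ac)

definition Inv :: "nat \<Rightarrow> nat \<Rightarrow> nat \<Rightarrow> (nat \<Rightarrow> real) \<Rightarrow> bool" where
  "Inv n A i v \<longleftrightarrow> (\<forall>t\<in>{1..n}. v t \<ge> 0) \<and> Sv n v > 0 \<and> v 1 \<le> Sv n v \<and>
     (\<forall>j. 1 \<le> j \<and> j \<le> n div 2 - 1 \<and> j \<noteq> (i - 1) div 2 \<longrightarrow>
        real A * (v (2*j) + v (2*j+1)) \<le> 3/5 * Sv n v)"

lemma pair_rows:
  fixes n j :: nat
  assumes "even n" "1 \<le> j" "j \<le> n div 2 - 1"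
  shows "even (2*j)" "2 \<le> 2*j" "2*j < n" "odd (2*j+1)" "3 \<le> 2*j+1" "2*j+1 < n"
  using assms by auto

lemma Inv_step:
  assumes n: "even n" "n \<ge> 4" and inv: "Inv n A' i v" and A': "A' \<ge> 2"
    and Ac: "5 * real A \<le> real c'"
  shows "Inv n A i (matvec n (Theta n A' c') v)"
proof -
  let ?x = "matvec n (Theta n A' c') v"
  have nn: "\<forall>t\<in>{1..n}. v t \<ge> 0" and S: "Sv n v > 0" and v1: "v 1 \<le> Sv n v"
    and pr: "\<And>j. 1 \<le> j \<and> j \<le> n div 2 - 1 \<and> j \<noteq> (i - 1) div 2 \<Longrightarrow>
        real A' * (v (2*j) + v (2*j+1)) \<le> 3/5 * Sv n v"
    using inv unfolding Inv_def by blast+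
  have xnn: "\<forall>t\<in>{1..n}. ?x t \<ge> 0" using matvec_nonneg[OF nn] by blast
  have xn: "?x n = v 1 + (real c' + 1) * Sv n v" using row_n n by simp
  have x1: "?x 1 = v 1 + real c' * Sv n v" using row_1 n by simp
  have Sx: "Sv n ?x \<ge> ?x n" using Sv_ge_n[OF xnn] n by simp
  have v1nn: "v 1 \<ge> 0" using nn n by auto
  have c'nn: "real c' \<ge> 0" by simp
  have Sx2: "Sv n ?x \<ge> (real c' + 1) * Sv n v" using Sx xn v1nn by linarith
  have pos: "Sv n ?x > 0" using Sx2 S c'nn
    by (smt (verit, best) mult_pos_pos)
  have dd: "(real c' + 1) * Sv n v = real c' * Sv n v + Sv n v" by (simp add: algebra_simps)
  have x1le: "?x 1 \<le> Sv n ?x" using x1 xn Sx S dd by linarith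
  have "real A * (?x (2*j) + ?x (2*j+1)) \<le> 3/5 * Sv n ?x"
    if j: "1 \<le> j \<and> j \<le> n div 2 - 1 \<and> j \<noteq> (i - 1) div 2" for j
  proof -
    note P = pair_rows[OF n(1), of j]
    have e: "?x (2*j) = Sv n v + v (2*j) + v (2*j+1)" using row_even P j by simp
    have o: "?x (2*j+1) = real A' * v (2*j) + (real A' + 1) * v (2*j+1)"
      using row_odd[of "2*j+1" n] P j by simp
    have a0: "v (2*j) \<ge> 0" "v (2*j+1) \<ge> 0" using nn P j by auto
    have pj: "real A' * (v (2*j) + v (2*j+1)) \<le> 3/5 * Sv n v" using pr j by blast
    have A'r: "real A' \<ge> 2" using A' by simp
    have "?x (2*j) + ?x (2*j+1) \<le> Sv n v + 2 * (real A' * (v (2*j) + v (2*j+1)))"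
    proof -
      have h1: "(real A' - 1) * v (2*j) \<ge> 0" using a0 A'r by simp
      have h2: "(real A' - 2) * v (2*j+1) \<ge> 0" using a0 A'r by simp
      have h1': "real A' * v (2*j) - v (2*j) \<ge> 0" using h1 by (simp add: algebra_simps)
      have h2': "real A' * v (2*j+1) - 2 * v (2*j+1) \<ge> 0" using h2 by (simp add: algebra_simps)
      show ?thesis unfolding e o using h1' h2' by (simp add: algebra_simps)
    qed
    also have "\<dots> \<le> 3 * Sv n v" using pj S by linarith
    finally have s3: "?x (2*j) + ?x (2*j+1) \<le> 3 * Sv n v" .
    have "real A * (?x (2*j) + ?x (2*j+1)) \<le> real A * (3 * Sv n v)"
      by (rule mult_left_mono[OF s3]) simp
    also have "\<dots> \<le> 3/5 * (real c' * Sv n v)"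
    proof -
      have "5 * real A * Sv n v \<le> real c' * Sv n v" using Ac S by (intro mult_right_mono) auto
      then show ?thesis by (simp add: algebra_simps)
    qed
    also have "\<dots> \<le> 3/5 * Sv n ?x" using Sx2 S dd by linarith
    finally show ?thesis .
  qed
  then show ?thesis unfolding Inv_def using xnn pos x1le by blast
qed

lemma Inv_base:
  assumes "odd i" "3 \<le> i" "i \<le> n - 1" "n \<ge> 4"
  shows "Inv n A i (unitvec i)"
proof -
  have S: "Sv n (unitvec i) = 1"
    unfolding Sv_def unitvec_def using assms by (simp add: sum.delta)
  have "unitvec i (2*j) = 0 \<and> unitvec i (2*j+1) = 0" if "j \<noteq> (i - 1) div 2" for j
    using that assms unfolding unitvec_def by auto
  then show ?thesis unfolding Inv_def using S assms by (auto simp: unitvec_def)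
qed

lemma delta_bound:
  assumes n: "even n" "n \<ge> 4" and inv: "Inv n A' i v"
    and j: "1 \<le> j \<and> j \<le> n div 2 - 1 \<and> j \<noteq> (i - 1) div 2"
  shows "normalized n (matvec n (Theta n A' c') v) (2*j) - normalized n (matvec n (Theta n A' c') v) (2*j+1)
     \<ge> 1 / (5 * real n * (real A' + real c' + 2))"
proof -
  let ?x = "matvec n (Theta n A' c') v"
  let ?M = "real A' + real c' + 2"
  have nn: "\<forall>t\<in>{1..n}. v t \<ge> 0" and S: "Sv n v > 0" and v1: "v 1 \<le> Sv n v"
    and pj: "real A' * (v (2*j) + v (2*j+1)) \<le> 3/5 * Sv n v"
    using inv j unfolding Inv_def by blast+
  note P = pair_rows[OF n(1), of j]
  have e: "?x (2*j) = Sv n v + v (2*j) + v (2*j+1)" using row_even P j by simp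
  have o: "?x (2*j+1) = real A' * v (2*j) + (real A' + 1) * v (2*j+1)"
    using row_odd[of "2*j+1" n] P j by simp
  have a0: "v (2*j) \<ge> 0" "v (2*j+1) \<ge> 0" using nn P j by auto
  have D: "?x (2*j) - ?x (2*j+1) \<ge> 2/5 * Sv n v"
    unfolding e o using a0 pj by (simp add: algebra_simps)
  have xnn: "\<forall>t\<in>{1..n}. ?x t \<ge> 0" using matvec_nonneg[OF nn] by blast
  have xle: "\<And>t. ?x t \<le> ?M * (2 * Sv n v)"
  proof -
    fix t
    have "?x t \<le> ?M * (v 1 + Sv n v)" using matvec_le[OF nn] n by simp
    also have "\<dots> \<le> ?M * (2 * Sv n v)" using v1 by (intro mult_left_mono) auto
    finally show "?x t \<le> ?M * (2 * Sv n v)" .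
  qed
  have N: "vnorm1 n ?x = (\<Sum>t=1..n. ?x t)" by (simp add: vnorm1_def)
  have Nle: "vnorm1 n ?x \<le> real n * (?M * (2 * Sv n v))"
    unfolding N using sum_mono[of "{1..n}" ?x "\<lambda>_. ?M * (2 * Sv n v)"] xle by simp
  have xn: "?x n = v 1 + (real c' + 1) * Sv n v" using row_n n by simp
  have "vnorm1 n ?x \<ge> ?x n" unfolding N using xnn n by (intro member_le_sum) auto
  moreover have "?x n > 0" using xn S nn n
  proof -
    have "v 1 \<ge> 0" using nn n by auto
    moreover have "(real c' + 1) * Sv n v > 0" using S by simp
    ultimately show ?thesis using xn by linarith
  qed
  ultimately have Npos: "vnorm1 n ?x > 0" by linarith
  have Mpos: "?M > 0" by simp
  have npos: "real n > 0" using n by simp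
  have "1 / (5 * real n * ?M) * vnorm1 n ?x \<le> 1 / (5 * real n * ?M) * (real n * (?M * (2 * Sv n v)))"
    using Nle by (intro mult_left_mono) auto
  also have "\<dots> = 2/5 * Sv n v"
  proof -
    define K where "K = real n * ?M"
    have Kp: "K > 0" using Mpos npos by (simp add: K_def)
    have e1: "5 * real n * ?M = 5 * K" by (simp add: K_def)
    have e2: "real n * (?M * (2 * Sv n v)) = K * (2 * Sv n v)" by (simp add: K_def)
    show ?thesis unfolding e1 e2 using Kp by (simp add: field_simps)
  qed
  finally have "1 / (5 * real n * ?M) * vnorm1 n ?x \<le> ?x (2*j) - ?x (2*j+1)" using D by linarith
  then have "1 / (5 * real n * ?M) \<le> (?x (2*j) - ?x (2*j+1)) / vnorm1 n ?x"
    using Npos by (simp add: pos_le_divide_eq)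
  moreover have "normalized n ?x (2*j) - normalized n ?x (2*j+1) = (?x (2*j) - ?x (2*j+1)) / vnorm1 n ?x"
    unfolding normalized_def by (rule diff_divide_distrib[symmetric])
  ultimately show ?thesis by simp
qed

theorem mainTheorem9:
  fixes n p :: nat and a c :: "nat \<Rightarrow> nat" and i :: nat
    and mu :: "nat \<Rightarrow> nat \<Rightarrow> real"
  assumes n_even: "even n" and n_ge: "n \<ge> 4"
    and p_ge: "p \<ge> n + 1"
    and c1_pos: "c 1 > 0"
    and a_def: "\<And>k. k \<ge> 1 \<Longrightarrow> a k = p * c k"
    and c_rec: "\<And>k. k \<ge> 1 \<Longrightarrow> c (k + 1) = p ^ 2 * c k"
    and mu_def: "\<And>k. \<exists>L. (\<forall>t\<in>{1..n}. (\<lambda>d. normalized n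
                       (thetaprod n (\<lambda>m. Theta n (a m) (c m)) k d (unitvec i)) t)
                       \<longlonglongrightarrow> L t)
                   \<and> (\<exists>r>0. \<forall>t\<in>{1..n}. mu k t = r * L t)"
    and i_odd: "odd i" and i_ge: "3 \<le> i" and i_le: "i \<le> n - 1"
  shows "\<forall>k\<ge>1. \<forall>j. 1 \<le> j \<and> j \<le> n div 2 - 1 \<and> j \<noteq> (i - 1) div 2
           \<longrightarrow> mu k (2 * j) > mu k (2 * j + 1)"
proof (intro allI impI)
  let ?Th = "\<lambda>m. Theta n (a m) (c m)"
  have p5: "p \<ge> 5" using p_ge n_ge by simp
  have cpos: "c k > 0" if "k \<ge> 1" for k
    using that
  proof (induction k rule: dec_induct)
    case base then show ?case using c1_pos by simp
  next
    case (step m) then show ?case using c_rec[of m] p5 by simp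
  qed
  have inv: "\<forall>k\<ge>1. Inv n (a k) i (thetaprod n ?Th k d (unitvec i))" for d
  proof (induction d)
    case 0 then show ?case using Inv_base[OF i_odd i_ge i_le n_ge] by simp
  next
    case (Suc d)
    show ?case
    proof (intro allI impI)
      fix k :: nat assume k: "k \<ge> 1"
      have I: "Inv n (a (k+1)) i (thetaprod n ?Th (k+1) d (unitvec i))" using Suc k by simp
      have ck: "c (k+1) \<ge> 1" using cpos[of "k+1"] by simp
      have A2: "a (k+1) \<ge> 2" using a_def[of "k+1"] p5 ck
        by (metis le_add2 mult_le_mono nat_mult_1_right order.trans numeral_le_iff semiring_norm(68) semiring_norm(69) semiring_norm(72) semiring_norm(73)) 
      have "c (k+1) = p * a k" using c_rec[OF k] a_def[OF k] by (simp add: power2_eq_square)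
      then have "5 * a k \<le> c (k+1)" using p5 by simp
      then have Ac: "5 * real (a k) \<le> real (c (k+1))" by linarith
      show "Inv n (a k) i (thetaprod n ?Th k (Suc d) (unitvec i))"
        unfolding thetaprod_Suc using Inv_step[OF n_even n_ge I A2 Ac] by simp
    qed
  qed
  fix k j :: nat
  assume k: "k \<ge> 1" and j: "1 \<le> j \<and> j \<le> n div 2 - 1 \<and> j \<noteq> (i - 1) div 2"
  note P = pair_rows[OF n_even, of j]
  obtain L r where L: "\<forall>t\<in>{1..n}. (\<lambda>d. normalized n (thetaprod n ?Th k d (unitvec i)) t) \<longlonglongrightarrow> L t"
    and r: "r > 0" and mu: "\<forall>t\<in>{1..n}. mu k t = r * L t"
    using mu_def[of k] by blast
  have t1: "2*j \<in> {1..n}" "2*j+1 \<in> {1..n}" using P j by auto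
  define \<delta> where "\<delta> = 1 / (5 * real n * (real (a (k+1)) + real (c (k+1)) + 2))"
  have lim: "(\<lambda>d. normalized n (thetaprod n ?Th k d (unitvec i)) (2*j)
        - normalized n (thetaprod n ?Th k d (unitvec i)) (2*j+1)) \<longlonglongrightarrow> L (2*j) - L (2*j+1)"
    using L t1 by (intro tendsto_diff) auto
  have ev: "\<forall>d\<ge>1. \<delta> \<le> normalized n (thetaprod n ?Th k d (unitvec i)) (2*j)
        - normalized n (thetaprod n ?Th k d (unitvec i)) (2*j+1)"
  proof (intro allI impI)
    fix d :: nat assume "d \<ge> 1"
    then obtain d' where d: "d = Suc d'" by (cases d) auto
    have I: "Inv n (a (k+1)) i (thetaprod n ?Th (k+1) d' (unitvec i))" using inv k by simp
    show "\<delta> \<le> normalized n (thetaprod n ?Th k d (unitvec i)) (2*j)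
        - normalized n (thetaprod n ?Th k d (unitvec i)) (2*j+1)"
      unfolding d thetaprod_Suc \<delta>_def using delta_bound[OF n_even n_ge I j] by simp
  qed
  have "\<delta> \<le> L (2*j) - L (2*j+1)"
    by (rule LIMSEQ_le_const[OF lim]) (use ev in blast)
  moreover have "\<delta> > 0" unfolding \<delta>_def using n_ge by simp
  ultimately have "L (2*j) > L (2*j+1)" by linarith
  then show "mu k (2 * j) > mu k (2 * j + 1)" using mu t1 r by simp
qed

end
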